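(* Let $n\in\mathbb{N}$ and $\nu^*(u) = (\sin(nu), -\cos(nu))^{\top}$ for $u\in\mathbb{S}^1_{2\pi}$. Let $X^*:\mathbb{S}^1_{2\pi}\to\mathbb{R}^2$ be a non-constant map such that $(X^*,\nu^* )$ is a Legendre curve, and let $\lambda^*:[0,\infty)\to\mathbb{R}$ with $\lambda^*(0)=1$. Then $(X(u,t),\nu(u,t)) := (\lambda^*(t)X^*(u),\nu^*(u))$ is an inverse curvature flow (of class $C([0,\infty);C^1)\cap C^\infty(\mathbb{S}^1_{2\pi}\times(0,\infty))$) if and only if $$\lambda^*(t) = e^{(1-\frac{m^2}{n^2})t}\quad (t\ge 0),$$ $$X^*(u) = C_1\begin{pmatrix} \frac{n}{n^2-m^2}\sin(nu)\cos(mu) - \frac{m}{n^2-m^2}\cos(nu)\sin(mu)\\ -\frac{n}{n^2-m^2}\cos(nu)\cos(mu) - \frac{m}{n^2-m^2}\sin(nu)\sin(mu)\end{pmatrix} + C_2\begin{pmatrix} \frac{n}{n^2-m^2}\sin(nu)\sin(mu) + \frac{m}{n^2-m^2}\cos(nu)\cos(mu)\\ -\frac{n}{n^2-m^2}\cos(nu)\sin(mu) + \frac{m}{n^2-m^2}\sin(nu)\cos(mu)\end{pmatrix}$$ for $u\in\mathbb{S}^1_{2\pi}$, where the constants $m, C_1, C_2$ satisfy one of: (i) $m\in\mathbb{N}\setminus\{n\}$ and $(C_1,C_2)\in\mathbb{R}^2\setminus\{(0,0)\}$; or (ii) $m=0$, $C_1\neq0$, $C_2=0$. Moreover, in this case the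 Legendre curvature $(\ell^*,\beta^* )$ of $(X^*,\nu^* )$ is $\ell^*(u)=n$, $\beta^*(u) = C_1\cos(mu)+C_2\sin(mu)$.
   Context: $\mathbb{S}^1_{2\pi} = \mathbb{R}/2\pi\mathbb{Z}$ and $\mathbb{S}^1\subset\mathbb{R}^2$ is the unit circle; $J$ denotes anticlockwise rotation by $\pi/2$. A Legendre curve is a $C^1$ pair $(X,\nu):\mathbb{S}^1_{2\pi}\to\mathbb{R}^2\times\mathbb{S}^1$ with $\langle \partial_u X,\nu\rangle = 0$; $\mu=J\nu$; its Legendre curvature is $\ell = \langle\partial_u\nu,\mu\rangle$, $\beta=\langle\partial_uX,\mu\rangle$; it is $\ell$-convex if $\ell>0$. A flow of Legendre curves is a map $(X,\nu):\mathbb{S}^1_{2\pi}\times[0,\infty)\to\mathbb{R}^2\times\mathbb{S}^1$ each of whose time slices is a Legendre curve, with normal velocity $N=\langle\partial_tX,\nu\rangle$. An inverse curvature flow is such a flow, smooth for $t>0$, whose time slices are $\ell$-convex for $t>0$ and with $N=\beta/\ell$ on $\mathbb{S}^1_{2\pi}\times(0,\infty)$. *)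

theory Defs
  imports "HOL-Analysis.Analysis"
begin

text \<open>The plane R^2 is modelled as real \<times> real (with its product inner product);
  maps on S^1_{2pi} = R/2piZ are modelled as 2pi-periodic maps on real.\<close>

definition rotJ :: "real \<times> real \<Rightarrow> real \<times> real" where
  "rotJ v = (- snd v, fst v)"

definition periodic2pi :: "(real \<Rightarrow> 'a) \<Rightarrow> bool" where
  "periodic2pi f \<longleftrightarrow> (\<forall>u. f (u + 2 * pi) = f u)"

definition C1_map :: "(real \<Rightarrow> real \<times> real) \<Rightarrow> bool" where
  "C1_map f \<longleftrightarrow> (\<exists>f'. (\<forall>u. (f has_vector_derivative f' u) (at u)) \<and> continuous_on UNIV f')"

definition legendre_curve :: "(real \<Rightarrow> real \<times> real) \<Rightarrow> (real \<Rightarrow> real \<times> real) \<Rightarrow> bool" where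
  "legendre_curve X \<nu> \<longleftrightarrow> periodic2pi X \<and> periodic2pi \<nu> \<and> C1_map X \<and> C1_map \<nu>
     \<and> (\<forall>u. norm (\<nu> u) = 1)
     \<and> (\<forall>u. inner (vector_derivative X (at u)) (\<nu> u) = 0)"

definition leg_ell :: "(real \<Rightarrow> real \<times> real) \<Rightarrow> (real \<Rightarrow> real \<times> real) \<Rightarrow> real \<Rightarrow> real" where
  "leg_ell X \<nu> u = inner (vector_derivative \<nu> (at u)) (rotJ (\<nu> u))"

definition leg_beta :: "(real \<Rightarrow> real \<times> real) \<Rightarrow> (real \<Rightarrow> real \<times> real) \<Rightarrow> real \<Rightarrow> real" where
  "leg_beta X \<nu> u = inner (vector_derivative X (at u)) (rotJ (\<nu> u))"

text \<open>C^infinity on an open set S of R^2 (coordinates (u,t)): all iterated partial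
  derivatives exist and are continuous; F i j stands for d_u^i d_t^j f.\<close>
definition smooth2_on :: "(real \<times> real) set \<Rightarrow> (real \<Rightarrow> real \<Rightarrow> 'b::real_normed_vector) \<Rightarrow> bool" where
  "smooth2_on S f \<longleftrightarrow> (\<exists>F :: nat \<Rightarrow> nat \<Rightarrow> real \<Rightarrow> real \<Rightarrow> 'b. F 0 0 = f \<and>
     (\<forall>i j. continuous_on S (\<lambda>(u, t). F i j u t) \<and>
        (\<forall>u t. (u, t) \<in> S \<longrightarrow>
           ((\<lambda>v. F i j v t) has_vector_derivative F (Suc i) j u t) (at u) \<and>
           ((\<lambda>s. F i j u s) has_vector_derivative F i (Suc j) u t) (at t))))"

definition legendre_flow :: "(real \<Rightarrow> real \<Rightarrow> real \<times> real) \<Rightarrow> (real \<Rightarrow> real \<Rightarrow> real \<times> real) \<Rightarrow> bool" where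
  "legendre_flow X \<nu> \<longleftrightarrow> (\<forall>t\<ge>0. legendre_curve (\<lambda>u. X u t) (\<lambda>u. \<nu> u t))"

text \<open>Class C([0,oo); C^1): the map and its u-derivative are jointly continuous on S^1 x [0,oo).\<close>
definition cont_C1_in_time :: "(real \<Rightarrow> real \<Rightarrow> real \<times> real) \<Rightarrow> bool" where
  "cont_C1_in_time X \<longleftrightarrow> continuous_on (UNIV \<times> {0..}) (\<lambda>(u, t). X u t)
     \<and> continuous_on (UNIV \<times> {0..}) (\<lambda>(u, t). vector_derivative (\<lambda>v. X v t) (at u))"

definition normal_velocity :: "(real \<Rightarrow> real \<Rightarrow> real \<times> real) \<Rightarrow> (real \<Rightarrow> real \<Rightarrow> real \<times> real) \<Rightarrow> real \<Rightarrow> real \<Rightarrow> real" where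
  "normal_velocity X \<nu> u t = inner (vector_derivative (\<lambda>s. X u s) (at t)) (\<nu> u t)"

definition inverse_curvature_flow :: "(real \<Rightarrow> real \<Rightarrow> real \<times> real) \<Rightarrow> (real \<Rightarrow> real \<Rightarrow> real \<times> real) \<Rightarrow> bool" where
  "inverse_curvature_flow X \<nu> \<longleftrightarrow> legendre_flow X \<nu>
     \<and> cont_C1_in_time X \<and> cont_C1_in_time \<nu>
     \<and> smooth2_on (UNIV \<times> {0<..}) X \<and> smooth2_on (UNIV \<times> {0<..}) \<nu>
     \<and> (\<forall>u t. t > 0 \<longrightarrow> leg_ell (\<lambda>v. X v t) (\<lambda>v. \<nu> v t) u > 0)
     \<and> (\<forall>u t. t > 0 \<longrightarrow> normal_velocity X \<nu> u t
           = leg_beta (\<lambda>v. X v t) (\<lambda>v. \<nu> v t) u / leg_ell (\<lambda>v. X v t) (\<lambda>v. \<nu> v t) u)"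

end

theory Submission
  imports Defs
begin


definition Wf :: "real \<Rightarrow> real \<Rightarrow> real \<times> real \<times> real \<times> real \<Rightarrow> real \<Rightarrow> real" where
  "Wf a b c u = fst c * cos (a*u) * cos (b*u) + fst (snd c) * cos (a*u) * sin (b*u)
     + fst (snd (snd c)) * sin (a*u) * cos (b*u) + snd (snd (snd c)) * sin (a*u) * sin (b*u)"

definition Dc :: "real \<Rightarrow> real \<Rightarrow> real \<times> real \<times> real \<times> real \<Rightarrow> real \<times> real \<times> real \<times> real" where
  "Dc a b c = (b * fst (snd c) + a * fst (snd (snd c)),
               - b * fst c + a * snd (snd (snd c)),
               - a * fst c + b * snd (snd (snd c)),
               - a * fst (snd c) - b * fst (snd (snd c)))"

lemma Wf_deriv: "(Wf a b c has_real_derivative Wf a b (Dc a b c) u) (at u within S)"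
  unfolding Wf_def[abs_def] Dc_def
  by (auto intro!: derivative_eq_intros simp: algebra_simps)

lemma pair_vd:
  assumes "(f has_real_derivative a) (at x within S)" "(g has_real_derivative b) (at x within S)"
  shows "((\<lambda>x. (f x, g x)) has_vector_derivative (a, b)) (at x within S)"
  using assms by (intro has_vector_derivative_Pair) (auto simp: has_real_derivative_iff_has_vector_derivative)

definition HW :: "real \<Rightarrow> real \<Rightarrow> _ \<Rightarrow> _ \<Rightarrow> nat \<Rightarrow> real \<Rightarrow> real \<times> real" where
  "HW a b cx cy i u = (Wf a b ((Dc a b ^^ i) cx) u, Wf a b ((Dc a b ^^ i) cy) u)"

lemma HW_deriv: "(HW a b cx cy i has_vector_derivative HW a b cx cy (Suc i) u) (at u)"
  unfolding HW_def[abs_def] by (auto intro!: pair_vd Wf_deriv)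

lemma smooth2_prod:
  fixes G :: "nat \<Rightarrow> real \<Rightarrow> real" and H :: "nat \<Rightarrow> real \<Rightarrow> real \<times> real"
  assumes T: "open T" and G0: "G 0 = g" and H0: "H 0 = h"
    and dG: "\<And>j t. t \<in> T \<Longrightarrow> (G j has_real_derivative G (Suc j) t) (at t)"
    and dH: "\<And>i u. (H i has_vector_derivative H (Suc i) u) (at u)"
  shows "smooth2_on (UNIV \<times> T) (\<lambda>u t. g t *\<^sub>R h u)"
  unfolding smooth2_on_def
proof (intro exI[of _ "\<lambda>i j u t. G j t *\<^sub>R H i u"] conjI allI impI)
  show "(\<lambda>i j u t. G j t *\<^sub>R H i u) 0 0 = (\<lambda>u t. g t *\<^sub>R h u)" using G0 H0 by simp
  fix i j
  have cG: "continuous_on T (G j)"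
    by (rule DERIV_continuous_on) (use dG has_field_derivative_at_within in blast)
  have cH: "continuous_on UNIV (H i)"
    by (rule continuous_at_imp_continuous_on) (use dH has_vector_derivative_continuous in blast)
  have "continuous_on (UNIV \<times> T) (\<lambda>x. G j (snd x) *\<^sub>R H i (fst x))"
    apply (intro continuous_on_scaleR)
     apply (rule continuous_on_compose2[OF cG]) apply (auto intro!: continuous_intros)[2]
    apply (rule continuous_on_compose2[OF cH]) apply (auto intro!: continuous_intros)
    done
  then show "continuous_on (UNIV \<times> T) (\<lambda>(u, t). G j t *\<^sub>R H i u)"
    by (simp add: case_prod_beta')
  fix u t :: real assume ut: "(u, t) \<in> UNIV \<times> T"
  show "((\<lambda>v. G j t *\<^sub>R H i v) has_vector_derivative G j t *\<^sub>R H (Suc i) u) (at u)"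
    using has_vector_derivative_scaleR[OF DERIV_const[of "G j t"] dH[of i u]] by simp
  show "((\<lambda>s. G j s *\<^sub>R H i u) has_vector_derivative G (Suc j) t *\<^sub>R H i u) (at t)"
    using has_vector_derivative_scaleR[OF dG[of t j] has_vector_derivative_const[of "H i u"]] ut by simp
qed



lemma periodic_N:
  fixes h :: "real \<Rightarrow> 'a"
  assumes "\<And>u. h (u + 2*pi) = h u"
  shows "h (u + 2*pi*real N) = h u"
proof (induction N)
  case (Suc N)
  have "h (u + 2*pi*real (Suc N)) = h ((u + 2*pi*real N) + 2*pi)" by (simp add: algebra_simps)
  also have "\<dots> = h (u + 2*pi*real N)" by (rule assms)
  finally show ?case using Suc by simp
qed simp

lemma mono_periodic_const:
  fixes h :: "real \<Rightarrow> real"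
  assumes mono: "\<And>x y. x \<le> y \<Longrightarrow> h x \<le> h y" and per: "\<And>u. h (u + 2*pi) = h u"
  shows "h x = h 0"
proof -
  obtain N :: nat where N: "\<bar>x\<bar> / (2*pi) < real N" using reals_Archimedean2 by blast
  have "\<bar>x\<bar> < 2*pi*real N" using N pi_gt_zero by (simp add: field_simps)
  then have x1: "-(2*pi*real N) \<le> x" and x2: "x \<le> 2*pi*real N" by auto
  have a: "h (2*pi*real N) = h 0" using periodic_N[of h 0 N, OF per] by simp
  have b: "h (-(2*pi*real N)) = h 0" using periodic_N[of h "-(2*pi*real N)" N, OF per] by simp
  show ?thesis using mono[OF x1] mono[OF x2] a b by simp
qed

lemma ode_part:
  fixes p q :: "real \<Rightarrow> real" and n c :: real
  assumes n: "n > 0"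
    and dp: "\<And>u. (p has_real_derivative n * q u) (at u)"
    and dq: "\<And>u. (q has_real_derivative n * (c - 1) * p u) (at u)"
    and pp: "\<And>u. p (u + 2*pi) = p u" and pq: "\<And>u. q (u + 2*pi) = q u"
    and nz: "\<exists>u. p u \<noteq> 0 \<or> q u \<noteq> 0"
  shows "\<exists>m::nat. \<exists>A B. c = 1 - (real m)^2 / n^2 \<and> (A, B) \<noteq> (0, 0) \<and> (m = 0 \<longrightarrow> B = 0)
     \<and> (\<forall>u. p u = A * cos (real m * u) + B * sin (real m * u)
          \<and> q u = real m / n * (- A * sin (real m * u) + B * cos (real m * u)))"
proof (cases "c \<ge> 1")
  case True
  define h where "h u = p u * q u" for u
  have dh: "(h has_real_derivative n * (q u)^2 + n * (c - 1) * (p u)^2) (at u)" for u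
    unfolding h_def[abs_def]
    by (rule derivative_eq_intros dp dq refl)+ (simp add: power2_eq_square algebra_simps)
  have nn: "n * (q u)^2 + n * (c - 1) * (p u)^2 \<ge> 0" for u
    using True n by (intro add_nonneg_nonneg mult_nonneg_nonneg) auto
  have mono: "h x \<le> h y" if "x \<le> y" for x y
    by (rule DERIV_nonneg_imp_nondecreasing[OF that]) (use dh nn in blast)
  have hper: "h (u + 2*pi) = h u" for u using pp pq by (simp add: h_def)
  have hc: "h x = h 0" for x by (rule mono_periodic_const[of h, OF mono hper])
  have "((\<lambda>_. h 0) has_real_derivative 0) (at u)" for u by simp
  moreover have "h = (\<lambda>_. h 0)" using hc by auto
  ultimately have z: "n * (q u)^2 + n * (c - 1) * (p u)^2 = 0" for u
    using dh DERIV_unique by metis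
  have q0: "q u = 0" for u
  proof -
    have "n * (q u)^2 \<ge> 0" "n * (c - 1) * (p u)^2 \<ge> 0" using n True by auto
    then have "n * (q u)^2 = 0" using z[of u] by linarith
    then show ?thesis using n by simp
  qed
  have c1: "c = 1"
  proof (rule ccontr)
    assume "c \<noteq> 1" then have "c > 1" using True by simp
    have "p u = 0" for u
    proof -
      have "n * (c - 1) * (p u)^2 = 0" using z[of u] q0[of u] by simp
      then show ?thesis using n \<open>c > 1\<close> by simp
    qed
    then show False using nz q0 by auto
  qed
  have "((p has_real_derivative 0) (at u))" for u using dp[of u] q0[of u] by simp
  then have pc: "p u = p 0" for u using DERIV_isconst_all by blast
  have A: "p 0 \<noteq> 0" using nz q0 pc by metis
  show ?thesis
    by (rule exI[of _ 0], rule exI[of _ "p 0"], rule exI[of _ 0]) (use c1 A pc q0 in auto)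
next
  case False
  define k where "k = n^2 * (1 - c)"
  have k: "k > 0" using False n by (simp add: k_def)
  define w where "w = sqrt k"
  have w: "w > 0" "w^2 = k" using k by (auto simp: w_def)
  have cm1: "n * (c - 1) = - (k / n)" using n by (simp add: k_def field_simps power2_eq_square)
  have kw: "k = w*w" using w(2) by (simp add: power2_eq_square)
  have cn: "c = 1 - w*w/(n*n)" using n w(2) by (simp add: k_def field_simps power2_eq_square)
  define A where "A = p 0"
  define B where "B = n * q 0 / w"
  define e where "e u = p u - A * cos (w*u) - B * sin (w*u)" for u
  define f where "f u = q u - w / n * (- A * sin (w*u) + B * cos (w*u))" for u
  have de: "(e has_real_derivative n * f u) (at u)" for u
    unfolding e_def[abs_def]
    by (rule derivative_eq_intros dp refl)+ (use n in \<open>simp add: f_def algebra_simps\<close>)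
  have df: "(f has_real_derivative - (k / n) * e u) (at u)" for u
    unfolding f_def[abs_def]
    apply (rule derivative_eq_intros dq refl)+
    using n by (simp add: e_def cn kw field_simps)
  define E where "E u = k * (e u)^2 + n^2 * (f u)^2" for u
  have dE: "(E has_real_derivative 0) (at u)" for u
    unfolding E_def[abs_def]
    apply (rule derivative_eq_intros de df refl)+
    using n by (simp add: field_simps power2_eq_square)
  have E0: "E 0 = 0" using w n by (simp add: E_def e_def f_def A_def B_def)
  have Ez: "E u = 0" for u using DERIV_isconst_all[of E u 0] dE E0 by simp
  have ef: "e u = 0 \<and> f u = 0" for u
  proof -
    have "k * (e u)^2 \<ge> 0" "n^2 * (f u)^2 \<ge> 0" using k by auto
    then have "k * (e u)^2 = 0" "n^2 * (f u)^2 = 0" using Ez[of u] unfolding E_def by linarith+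
    then show ?thesis using k n by simp
  qed
  have pf: "p u = A * cos (w*u) + B * sin (w*u)" for u using ef[of u] by (simp add: e_def)
  have qf: "q u = w / n * (- A * sin (w*u) + B * cos (w*u))" for u using ef[of u] by (simp add: f_def)
  have AB: "(A, B) \<noteq> (0, 0)"
  proof
    assume "(A, B) = (0, 0)"
    then show False using nz pf qf by auto
  qed
  define th where "th = w * (2*pi)"
  have e1: "A * cos th + B * sin th = A"
    using pp[of 0] pf[of "2*pi"] pf[of 0] by (simp add: th_def)
  have "w / n * (- A * sin th + B * cos th) = w / n * B"
    using pq[of 0] qf[of "2*pi"] qf[of 0] by (simp add: th_def)
  then have e2: "- A * sin th + B * cos th = B" using w n by simp
  have "(A^2 + B^2) * (cos th - 1) = A * (A * cos th + B * sin th - A) + B * (- A * sin th + B * cos th - B)"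
    by (simp add: algebra_simps power2_eq_square)
  also have "\<dots> = 0" using e1 e2 by simp
  finally have "(A^2 + B^2) * (cos th - 1) = 0" .
  moreover have "A^2 + B^2 > 0" using AB by (auto simp: sum_power2_gt_zero_iff)
  ultimately have "cos th = 1" by auto
  then obtain j :: int where j: "th = real_of_int j * 2 * pi" using cos_one_2pi_int by blast
  have wj: "w = real_of_int j" using j by (simp add: th_def)
  then have jpos: "j > 0" using w by simp
  define m where "m = nat j"
  have wm: "w = real m" using wj jpos by (simp add: m_def)
  have m0: "m \<noteq> 0" using jpos by (simp add: m_def)
  have cc: "c = 1 - (real m)^2 / n^2" using w(2) wm n by (simp add: k_def field_simps)
  show ?thesis
    by (rule exI[of _ m], rule exI[of _ A], rule exI[of _ B]) (use cc AB m0 pf qf wm in auto)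
qed



definition XF :: "real \<Rightarrow> real \<Rightarrow> real \<Rightarrow> real \<Rightarrow> real \<Rightarrow> real \<times> real" where
  "XF n m C1 C2 u =
               C1 *\<^sub>R
                 ( n / (n ^ 2 - m ^ 2) * sin (n * u) * cos (m * u)
                   - m / (n ^ 2 - m ^ 2) * cos (n * u) * sin (m * u),
                   - n / (n ^ 2 - m ^ 2) * cos (n * u) * cos (m * u)
                   - m / (n ^ 2 - m ^ 2) * sin (n * u) * sin (m * u))
             + C2 *\<^sub>R
                 ( n / (n ^ 2 - m ^ 2) * sin (n * u) * sin (m * u)
                   + m / (n ^ 2 - m ^ 2) * cos (n * u) * cos (m * u),
                   - n / (n ^ 2 - m ^ 2) * cos (n * u) * sin (m * u)
                   + m / (n ^ 2 - m ^ 2) * sin (n * u) * cos (m * u))"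

definition cxF where "cxF n m C1 C2 = (C2 * (m / (n^2 - m^2)), - C1 * (m / (n^2 - m^2)), C1 * (n / (n^2 - m^2)), C2 * (n / (n^2 - m^2)))"
definition cyF where "cyF n m C1 C2 = (- C1 * (n / (n^2 - m^2)), - C2 * (n / (n^2 - m^2)), C2 * (m / (n^2 - m^2)), - C1 * (m / (n^2 - m^2)))"

lemma XF_HW: "XF n m C1 C2 = HW n m (cxF n m C1 C2) (cyF n m C1 C2) 0"
  by (auto simp: fun_eq_iff XF_def HW_def Wf_def cxF_def cyF_def algebra_simps)

lemma XF_deriv: "(XF n m C1 C2 has_vector_derivative HW n m (cxF n m C1 C2) (cyF n m C1 C2) 1 u) (at u)"
  using HW_deriv[of n m "cxF n m C1 C2" "cyF n m C1 C2" 0 u] by (simp add: XF_HW)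

lemma XF_vd: "vector_derivative (XF n m C1 C2) (at u) = HW n m (cxF n m C1 C2) (cyF n m C1 C2) 1 u"
  using XF_deriv vector_derivative_at by blast

lemma beta_gen:
  "inner (HW n m (C2*b, -C1*b, C1*a, C2*a) (-C1*a, -C2*a, C2*b, -C1*b) 1 u) (cos (n*u), sin (n*u))
    = (n*a - m*b) * (C1 * cos (m*u) + C2 * sin (m*u))"
proof -
  have s: "sin (n*u) * sin (n*u) = 1 - cos (n*u) * cos (n*u)" using sin_squared_eq[of "n*u"] by (simp add: power2_eq_square)
  show ?thesis by (simp add: HW_def Wf_def Dc_def algebra_simps s)
qed

lemma p_gen:
  "inner (HW n m (C2*b, -C1*b, C1*a, C2*a) (-C1*a, -C2*a, C2*b, -C1*b) 0 u) (sin (n*u), - cos (n*u))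
    = a * (C1 * cos (m*u) + C2 * sin (m*u))"
proof -
  have s: "sin (n*u) * sin (n*u) = 1 - cos (n*u) * cos (n*u)" using sin_squared_eq[of "n*u"] by (simp add: power2_eq_square)
  show ?thesis by (simp add: HW_def Wf_def Dc_def algebra_simps s)
qed

lemma XF_beta:
  assumes "n^2 \<noteq> m^2"
  shows "inner (HW n m (cxF n m C1 C2) (cyF n m C1 C2) 1 u) (cos (n*u), sin (n*u)) = C1 * cos (m*u) + C2 * sin (m*u)"
proof -
  have d: "n^2 - m^2 \<noteq> 0" using assms by simp
  have e: "n * (n / (n^2 - m^2)) - m * (m / (n^2 - m^2)) = 1"
  proof -
    define D where "D = n^2 - m^2"
    have D: "D \<noteq> 0" "n*n - m*m = D" using d by (auto simp: D_def power2_eq_square)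
    have "n * (n / D) - m * (m / D) = 1" using D by (simp add: field_simps)
    then show ?thesis by (simp add: D_def)
  qed
  show ?thesis using beta_gen[of n m C2 "m / (n^2 - m^2)" C1 "n / (n^2 - m^2)" u] e
    by (simp add: cxF_def cyF_def)
qed

lemma XF_p:
  "inner (XF n m C1 C2 u) (sin (n*u), - cos (n*u)) = n / (n^2 - m^2) * (C1 * cos (m*u) + C2 * sin (m*u))"
  using p_gen[of n m C2 "m / (n^2 - m^2)" C1 "n / (n^2 - m^2)" u]
  by (simp add: XF_HW cxF_def cyF_def)



lemma nu_deriv: "((\<lambda>u. (sin (N*u), - cos (N*u))) has_vector_derivative (N * cos (N*u), N * sin (N*u))) (at u)"
  by (rule pair_vd) (auto intro!: derivative_eq_intros)

lemma nu_vd: "vector_derivative (\<lambda>u. (sin (N*u), - cos (N*u))) (at u) = (N * cos (N*u), N * sin (N*u))"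
  using nu_deriv vector_derivative_at by blast

lemma mu_deriv: "((\<lambda>u. (cos (N*u), sin (N*u))) has_vector_derivative (- N * sin (N*u), N * cos (N*u))) (at u)"
  by (rule pair_vd) (auto intro!: derivative_eq_intros)

lemma rotJ_nu: "rotJ (sin a, - cos a) = (cos a, sin a)" by (simp add: rotJ_def)

lemma ell_nu: "leg_ell X (\<lambda>u. (sin (N*u), - cos (N*u))) u = N"
proof -
  have 1: "sin (N*u) * sin (N*u) + cos (N*u) * cos (N*u) = 1" using sin_cos_squared_add[of "N*u"] by (simp add: power2_eq_square)
  have "N * (cos (N*u) * cos (N*u)) + N * (sin (N*u) * sin (N*u)) = N * (sin (N*u) * sin (N*u) + cos (N*u) * cos (N*u))"
    by (simp add: distrib_left)
  then have "N * (cos (N*u) * cos (N*u)) + N * (sin (N*u) * sin (N*u)) = N" using 1 by simp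
  then show ?thesis by (simp add: leg_ell_def nu_vd rotJ_def)
qed

lemma vd_scale:
  assumes "(f has_vector_derivative D) (at u)"
  shows "vector_derivative (\<lambda>v. a *\<^sub>R f v) (at u) = a *\<^sub>R D"
proof -
  have "((\<lambda>v. a *\<^sub>R f v) has_vector_derivative a *\<^sub>R D) (at u)"
    using has_vector_derivative_scaleR[OF DERIV_const[of a] assms] by simp
  then show ?thesis using vector_derivative_at by blast
qed

lemma decomp:
  fixes v :: "real \<times> real"
  shows "v = (inner v (sin a, - cos a) * sin a + inner v (cos a, sin a) * cos a,
              - inner v (sin a, - cos a) * cos a + inner v (cos a, sin a) * sin a)"
proof (cases v)
  case (Pair x y)
  have s: "sin a * sin a = 1 - cos a * cos a" using sin_squared_eq[of a] by (simp add: power2_eq_square)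
  show ?thesis using Pair by (simp add: algebra_simps s)
qed

lemma XF_AB:
  assumes "N \<noteq> 0" "N^2 \<noteq> M^2"
  shows "XF N M (A * (N^2 - M^2) / N) (B * (N^2 - M^2) / N) u =
    ((A * cos (M*u) + B * sin (M*u)) * sin (N*u) + M / N * (- A * sin (M*u) + B * cos (M*u)) * cos (N*u),
     - (A * cos (M*u) + B * sin (M*u)) * cos (N*u) + M / N * (- A * sin (M*u) + B * cos (M*u)) * sin (N*u))"
proof -
  define D where "D = N^2 - M^2"
  have D: "D \<noteq> 0" using assms by (simp add: D_def)
  show ?thesis using D assms(1) unfolding D_def[symmetric]
    by (simp add: XF_def D_def[symmetric] field_simps)
qed



lemma cont_prod:
  fixes h :: "real \<Rightarrow> real \<times> real"
  assumes h: "continuous_on UNIV h" and lam: "\<And>t. t \<ge> 0 \<Longrightarrow> lam t = exp (c * t)"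
  shows "continuous_on (UNIV \<times> {0..}) (\<lambda>(u, t). lam t *\<^sub>R h u)"
proof -
  have "continuous_on (UNIV \<times> {0..}) (\<lambda>x. exp (c * snd x) *\<^sub>R h (fst x))"
    by (intro continuous_on_scaleR continuous_intros continuous_on_compose2[OF h]) auto
  then show ?thesis
    by (rule continuous_on_cong[THEN iffD1, rotated 2]) (auto simp: lam)
qed

lemma nat_sq_ne: "m \<noteq> n \<Longrightarrow> (real n)^2 \<noteq> (real m)^2"
  by (simp add: power2_eq_iff_nonneg)

lemma if_dir:
  fixes n m :: nat and Xs :: "real \<Rightarrow> real \<times> real" and lam :: "real \<Rightarrow> real" and C1 C2 :: real
  defines "\<nu>s \<equiv> (\<lambda>u. (sin (real n * u), - cos (real n * u)))"
  assumes n: "n \<ge> 1" and mn: "m \<noteq> n"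
    and leg: "legendre_curve Xs \<nu>s"
    and lamf: "\<forall>t\<ge>0. lam t = exp ((1 - real m ^ 2 / real n ^ 2) * t)"
    and XsF: "Xs = XF (real n) (real m) C1 C2"
  shows "inverse_curvature_flow (\<lambda>u t. lam t *\<^sub>R Xs u) (\<lambda>u t. \<nu>s u)"
proof -
  define N where "N = real n"
  define M where "M = real m"
  define c where "c = 1 - M^2 / N^2"
  have N: "N > 0" using n by (simp add: N_def)
  have NM: "N^2 \<noteq> M^2" using nat_sq_ne[OF mn] by (simp add: N_def M_def)
  have lamc: "\<And>t. t \<ge> 0 \<Longrightarrow> lam t = exp (c * t)" using lamf by (simp add: c_def N_def M_def)
  define X' where "X' u = HW N M (cxF N M C1 C2) (cyF N M C1 C2) 1 u" for u
  have XsF': "Xs = XF N M C1 C2" using XsF by (simp add: N_def M_def)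
  have dX: "(Xs has_vector_derivative X' u) (at u)" for u unfolding XsF' X'_def by (rule XF_deriv)
  have cX': "continuous_on UNIV X'"
    by (rule continuous_at_imp_continuous_on) (auto simp: X'_def[abs_def] intro: has_vector_derivative_continuous HW_deriv)
  have cXs: "continuous_on UNIV Xs"
    by (rule continuous_at_imp_continuous_on) (auto intro: has_vector_derivative_continuous dX)
  have vdX: "vector_derivative Xs (at u) = X' u" for u using dX vector_derivative_at by blast
  have perX: "periodic2pi Xs" and perN: "periodic2pi \<nu>s" and C1N: "C1_map \<nu>s"
    and normN: "\<And>u. norm (\<nu>s u) = 1" and orth: "\<And>u. inner (X' u) (\<nu>s u) = 0"
    using leg vdX unfolding legendre_curve_def by auto
  have dlam: "(lam has_real_derivative c * exp (c * t)) (at t)" if "t > 0" for t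
  proof (rule has_field_derivative_transform_within_open[of "\<lambda>t. exp (c * t)" _ t "{0<..}"])
    show "((\<lambda>t. exp (c * t)) has_real_derivative c * exp (c * t)) (at t)"
      by (auto intro!: derivative_eq_intros)
  qed (use that lamc in auto)
  have vdsX: "vector_derivative (\<lambda>v. a *\<^sub>R Xs v) (at u) = a *\<^sub>R X' u" for a u
    by (rule vd_scale[OF dX])
  have F1: "legendre_flow (\<lambda>u t. lam t *\<^sub>R Xs u) (\<lambda>u t. \<nu>s u)"
    unfolding legendre_flow_def legendre_curve_def
  proof (intro allI impI conjI)
    fix t :: real
    show "periodic2pi (\<lambda>u. lam t *\<^sub>R Xs u)" using perX by (simp add: periodic2pi_def)
    show "periodic2pi (\<lambda>u. \<nu>s u)" using perN by simp
    show "C1_map (\<lambda>u. \<nu>s u)" using C1N by simp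
    show "norm (\<nu>s u) = 1" for u by (rule normN)
    show "inner (vector_derivative (\<lambda>u. lam t *\<^sub>R Xs u) (at u)) (\<nu>s u) = 0" for u
      using orth[of u] by (simp add: vdsX)
    show "C1_map (\<lambda>u. lam t *\<^sub>R Xs u)"
      unfolding C1_map_def
    proof (intro exI[of _ "\<lambda>u. lam t *\<^sub>R X' u"] conjI allI)
      show "((\<lambda>u. lam t *\<^sub>R Xs u) has_vector_derivative lam t *\<^sub>R X' u) (at u)" for u
        using has_vector_derivative_scaleR[OF DERIV_const[of "lam t"] dX[of u]] by simp
      show "continuous_on UNIV (\<lambda>u. lam t *\<^sub>R X' u)"
        by (intro continuous_on_scaleR continuous_on_const cX')
    qed
  qed
  have F2: "cont_C1_in_time (\<lambda>u t. lam t *\<^sub>R Xs u)"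
    unfolding cont_C1_in_time_def vdsX using cont_prod[OF cXs lamc] cont_prod[OF cX' lamc] by simp
  have nuvd: "vector_derivative (\<lambda>v. \<nu>s v) (at u) = (N * cos (N*u), N * sin (N*u))" for u
    unfolding \<nu>s_def N_def by (rule nu_vd)
  have F3: "cont_C1_in_time (\<lambda>u t. \<nu>s u)"
    unfolding cont_C1_in_time_def nuvd
  proof
    have "continuous_on (UNIV \<times> {0::real..}) (\<lambda>x. \<nu>s (fst x))" unfolding \<nu>s_def
      by (intro continuous_intros)
    then show "continuous_on (UNIV \<times> {0..}) (\<lambda>(u, t::real). \<nu>s u)" by (simp add: case_prod_beta')
    have "continuous_on (UNIV \<times> {0::real..}) (\<lambda>x. (N * cos (N * fst x), N * sin (N * fst x)))"
      by (intro continuous_intros)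
    then show "continuous_on (UNIV \<times> {0::real..}) (\<lambda>(u, t). (N * cos (N * u), N * sin (N * u)))"
      by (simp add: case_prod_beta')
  qed
  have F4: "smooth2_on (UNIV \<times> {0<..}) (\<lambda>u t. lam t *\<^sub>R Xs u)"
  proof (rule smooth2_prod[of "{0<..}" "\<lambda>j. if j = 0 then lam else (\<lambda>t. c^j * exp (c * t))" lam
        "HW N M (cxF N M C1 C2) (cyF N M C1 C2)" Xs])
    show "HW N M (cxF N M C1 C2) (cyF N M C1 C2) 0 = Xs" using XsF' XF_HW by simp
    fix j and t :: real assume t: "t \<in> {0<..}"
    show "((if j = 0 then lam else (\<lambda>t. c ^ j * exp (c * t))) has_real_derivative
          (if Suc j = 0 then lam else (\<lambda>t. c ^ Suc j * exp (c * t))) t) (at t)"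
    proof (cases j)
      case 0 then show ?thesis using dlam t by simp
    next
      case (Suc k)
      show ?thesis unfolding Suc
        by (auto intro!: derivative_eq_intros)
    qed
  qed (auto intro: HW_deriv)
  have H0: "HW N 0 (0, 0, 1, 0) (-1, 0, 0, 0) 0 = \<nu>s"
    by (auto simp: fun_eq_iff HW_def Wf_def \<nu>s_def N_def)
  have F5': "smooth2_on (UNIV \<times> {0<..}) (\<lambda>u t. (\<lambda>_. 1::real) t *\<^sub>R \<nu>s u)"
    by (rule smooth2_prod[of "{0<..}" "\<lambda>j. if j = 0 then (\<lambda>_. 1) else (\<lambda>_. 0)" "\<lambda>_. 1"
        "HW N 0 (0, 0, 1, 0) (-1, 0, 0, 0)" \<nu>s])
       (auto intro: HW_deriv simp: H0)
  then have F5: "smooth2_on (UNIV \<times> {0<..}) (\<lambda>u t. \<nu>s u)" by simp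
  have ell: "leg_ell (\<lambda>v. lam t *\<^sub>R Xs v) (\<lambda>v. \<nu>s v) u = N" for t u
    unfolding \<nu>s_def N_def by (rule ell_nu)
  have F6: "\<forall>u t. t > 0 \<longrightarrow> leg_ell (\<lambda>v. lam t *\<^sub>R Xs v) (\<lambda>v. \<nu>s v) u > 0"
    using ell N by simp
  have F7: "normal_velocity (\<lambda>u t. lam t *\<^sub>R Xs u) (\<lambda>u t. \<nu>s u) u t
           = leg_beta (\<lambda>v. lam t *\<^sub>R Xs v) (\<lambda>v. \<nu>s v) u / leg_ell (\<lambda>v. lam t *\<^sub>R Xs v) (\<lambda>v. \<nu>s v) u"
    if t: "t > 0" for u t
  proof -
    have "((\<lambda>s. lam s *\<^sub>R Xs u) has_vector_derivative (c * exp (c * t)) *\<^sub>R Xs u) (at t)"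
      using has_vector_derivative_scaleR[OF dlam[OF t] has_vector_derivative_const[of "Xs u"]] by simp
    then have vd: "vector_derivative (\<lambda>s. lam s *\<^sub>R Xs u) (at t) = (c * exp (c * t)) *\<^sub>R Xs u"
      using vector_derivative_at by blast
    have p: "inner (Xs u) (\<nu>s u) = N / (N^2 - M^2) * (C1 * cos (M*u) + C2 * sin (M*u))"
      unfolding XsF' \<nu>s_def N_def[symmetric] by (rule XF_p)
    have b: "leg_beta (\<lambda>v. lam t *\<^sub>R Xs v) (\<lambda>v. \<nu>s v) u = lam t * (C1 * cos (M*u) + C2 * sin (M*u))"
      unfolding leg_beta_def vdsX using XF_beta[OF NM, of C1 C2 u]
      by (simp add: \<nu>s_def N_def[symmetric] rotJ_nu X'_def)
    have cc: "c * (N / (N^2 - M^2)) = 1 / N"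
    proof -
      define D where "D = N^2 - M^2"
      have D: "D \<noteq> 0" using NM by (simp add: D_def)
      have "c = D / N^2" using N by (simp add: c_def D_def field_simps)
      then show ?thesis unfolding D_def[symmetric] using D N by (simp add: field_simps power2_eq_square)
    qed
    have "normal_velocity (\<lambda>u t. lam t *\<^sub>R Xs u) (\<lambda>u t. \<nu>s u) u t
        = exp (c * t) * (c * (N / (N^2 - M^2))) * (C1 * cos (M*u) + C2 * sin (M*u))"
      unfolding normal_velocity_def vd by (simp add: p)
    also have "\<dots> = exp (c * t) * (C1 * cos (M*u) + C2 * sin (M*u)) / N" by (simp only: cc) simp
    finally show ?thesis unfolding b ell using lamc[of t] t by simp
  qed
  show ?thesis unfolding inverse_curvature_flow_def
    using F1 F2 F3 F4 F5 F6 F7 by blast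
qed



lemma only_if_dir:
  fixes n :: nat and Xs :: "real \<Rightarrow> real \<times> real" and lam :: "real \<Rightarrow> real"
  defines "\<nu>s \<equiv> (\<lambda>u. (sin (real n * u), - cos (real n * u)))"
  assumes n: "n \<ge> 1"
    and leg: "legendre_curve Xs \<nu>s"
    and noncst: "\<exists>u v. Xs u \<noteq> Xs v"
    and lam0: "lam 0 = 1"
    and icf: "inverse_curvature_flow (\<lambda>u t. lam t *\<^sub>R Xs u) (\<lambda>u t. \<nu>s u)"
  shows "\<exists>(m::nat) (C1::real) (C2::real).
            ((m \<ge> 1 \<and> m \<noteq> n \<and> (C1, C2) \<noteq> (0, 0)) \<or> (m = 0 \<and> C1 \<noteq> 0 \<and> C2 = 0))
          \<and> (\<forall>t\<ge>0. lam t = exp ((1 - real m ^ 2 / real n ^ 2) * t))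
          \<and> Xs = XF (real n) (real m) C1 C2"
proof -
  define N where "N = real n"
  have N: "N > 0" using n by (simp add: N_def)
  have nuN: "\<nu>s = (\<lambda>u. (sin (N * u), - cos (N * u)))" by (simp add: \<nu>s_def N_def)
  obtain X' where dX: "\<And>u. (Xs has_vector_derivative X' u) (at u)"
    using leg unfolding legendre_curve_def C1_map_def by blast
  have vdX: "vector_derivative Xs (at u) = X' u" for u using dX vector_derivative_at by blast
  have perX: "\<And>u. Xs (u + 2*pi) = Xs u" and perN: "\<And>u. \<nu>s (u + 2*pi) = \<nu>s u"
    and orth: "\<And>u. inner (X' u) (\<nu>s u) = 0"
    using leg vdX unfolding legendre_curve_def periodic2pi_def by auto
  obtain u0 where u0: "Xs u0 \<noteq> 0"
  proof -
    obtain u v where "Xs u \<noteq> Xs v" using noncst by blast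
    then show ?thesis using that by (cases "Xs u = 0") auto
  qed
  define K where "K = inner (Xs u0) (Xs u0)"
  have K: "K \<noteq> 0" using u0 by (simp add: K_def)
  obtain F where F00: "F 0 0 = (\<lambda>u t. lam t *\<^sub>R Xs u)"
    and Fd: "\<And>i j u t. (u, t) \<in> UNIV \<times> {0<..} \<Longrightarrow>
           ((\<lambda>s. F i j u s) has_vector_derivative F i (Suc j) u t) (at t)"
  proof -
    have "smooth2_on (UNIV \<times> {0<..}) (\<lambda>u t. lam t *\<^sub>R Xs u)"
      using icf unfolding inverse_curvature_flow_def by blast
    then obtain F where F00': "F 0 0 = (\<lambda>u t. lam t *\<^sub>R Xs u)" and
      FF: "\<forall>i j. continuous_on (UNIV \<times> {0<..}) (\<lambda>(u, t). F i j u t) \<and> (\<forall>u t. (u, t) \<in> UNIV \<times> {0<..} \<longrightarrow>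
           ((\<lambda>v. F i j v t) has_vector_derivative F (Suc i) j u t) (at u) \<and>
           ((\<lambda>s. F i j u s) has_vector_derivative F i (Suc j) u t) (at t))"
      unfolding smooth2_on_def by blast
    have Fd': "\<And>i j u t. (u, t) \<in> UNIV \<times> {0<..} \<Longrightarrow>
           ((\<lambda>s. F i j u s) has_vector_derivative F i (Suc j) u t) (at t)"
      using FF by blast
    show ?thesis by (rule that[OF F00' Fd'])
  qed
  define dl where "dl t = inner (F 0 1 u0 t) (Xs u0) / K" for t
  have dlam: "(lam has_real_derivative dl t) (at t)" if t: "t > 0" for t
  proof -
    have hvd: "((\<lambda>s. lam s *\<^sub>R Xs u0) has_vector_derivative F 0 1 u0 t) (at t)"
      using Fd[of u0 t 0 0] t F00 by simp
    have "((\<lambda>s. inner (lam s *\<^sub>R Xs u0) (Xs u0)) has_vector_derivative inner (F 0 1 u0 t) (Xs u0)) (at t)"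
      by (rule bounded_linear.has_vector_derivative[OF bounded_linear_inner_left hvd])
    then have "((\<lambda>s. lam s * K) has_real_derivative inner (F 0 1 u0 t) (Xs u0)) (at t)"
      by (simp add: has_real_derivative_iff_has_vector_derivative K_def)
    from DERIV_cdivide[OF this, of K] show ?thesis using K by (simp add: dl_def)
  qed
  define p where "p u = inner (Xs u) (\<nu>s u)" for u
  define q where "q u = inner (Xs u) (cos (N*u), sin (N*u))" for u
  define b where "b u = inner (X' u) (cos (N*u), sin (N*u))" for u
  have ell: "leg_ell (\<lambda>v. a *\<^sub>R Xs v) (\<lambda>v. \<nu>s v) u = N" for a u
    unfolding nuN by (rule ell_nu)
  have beta: "leg_beta (\<lambda>v. a *\<^sub>R Xs v) (\<lambda>v. \<nu>s v) u = a * b u" for a u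
    unfolding leg_beta_def vd_scale[OF dX] by (simp add: nuN rotJ_nu b_def)
  have E1: "dl t * p u = lam t * b u / N" if t: "t > 0" for t u
  proof -
    have "((\<lambda>s. lam s *\<^sub>R Xs u) has_vector_derivative dl t *\<^sub>R Xs u) (at t)"
      using has_vector_derivative_scaleR[OF dlam[OF t] has_vector_derivative_const[of "Xs u"]] by simp
    then have vd: "vector_derivative (\<lambda>s. lam s *\<^sub>R Xs u) (at t) = dl t *\<^sub>R Xs u"
      using vector_derivative_at by blast
    have "normal_velocity (\<lambda>u t. lam t *\<^sub>R Xs u) (\<lambda>u t. \<nu>s u) u t
      = leg_beta (\<lambda>v. lam t *\<^sub>R Xs v) (\<lambda>v. \<nu>s v) u / leg_ell (\<lambda>v. lam t *\<^sub>R Xs v) (\<lambda>v. \<nu>s v) u"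
      using icf t unfolding inverse_curvature_flow_def by blast
    then show ?thesis unfolding normal_velocity_def vd beta ell by (simp add: p_def)
  qed
  have dp: "(p has_real_derivative N * q u) (at u)" for u
  proof -
    have "((\<lambda>x. inner (Xs x) (\<nu>s x)) has_vector_derivative
        inner (Xs u) (N * cos (N*u), N * sin (N*u)) + inner (X' u) (\<nu>s u)) (at u)"
      unfolding nuN by (rule bounded_bilinear.has_vector_derivative[OF bounded_bilinear_inner dX nu_deriv])
    moreover have "inner (Xs u) (N * cos (N*u), N * sin (N*u)) = N * q u"
      by (simp add: q_def inner_prod_def algebra_simps)
    ultimately show ?thesis using orth[of u]
      by (simp add: has_real_derivative_iff_has_vector_derivative p_def[abs_def])
  qed
  have dq0: "(q has_real_derivative - N * p u + b u) (at u)" for u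
  proof -
    have "((\<lambda>x. inner (Xs x) (cos (N*x), sin (N*x))) has_vector_derivative
        inner (Xs u) (- N * sin (N*u), N * cos (N*u)) + inner (X' u) (cos (N*u), sin (N*u))) (at u)"
      by (rule bounded_bilinear.has_vector_derivative[OF bounded_bilinear_inner dX mu_deriv])
    moreover have "inner (Xs u) (- N * sin (N*u), N * cos (N*u)) = - N * p u"
      by (simp add: p_def nuN inner_prod_def algebra_simps)
    ultimately show ?thesis
      by (simp add: has_real_derivative_iff_has_vector_derivative q_def[abs_def] b_def)
  qed
  have dec: "Xs u = (p u * sin (N*u) + q u * cos (N*u), - p u * cos (N*u) + q u * sin (N*u))" for u
    using decomp[of "Xs u" "N*u"] by (simp add: p_def q_def nuN)
  obtain u1 where u1: "p u1 \<noteq> 0"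
  proof (rule ccontr)
    assume "\<not> thesis"
    then have p0: "\<And>u. p u = 0" using that by blast
    then have "p = (\<lambda>_. 0)" by auto
    then have "((\<lambda>_. 0) has_real_derivative N * q u) (at u)" for u using dp by metis
    then have "N * q u = 0" for u using DERIV_unique DERIV_const by blast
    then have "q u = 0" for u using N by simp
    then have "Xs u = 0" for u using dec[of u] p0[of u] by (simp add: zero_prod_def)
    then show False using u0 by (simp add: zero_prod_def)
  qed
  define c where "c = b u1 / (N * p u1)"
  have dlc: "dl t = c * lam t" if "t > 0" for t
    using E1[OF that, of u1] u1 N by (simp add: c_def field_simps)
  have clam: "continuous_on {0..} lam"
  proof -
    have "continuous_on (UNIV \<times> {0..}) (\<lambda>(u, t). lam t *\<^sub>R Xs u)"
      using icf unfolding inverse_curvature_flow_def cont_C1_in_time_def by blast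
    then have "continuous_on {0..} (\<lambda>t. (\<lambda>(u, t). lam t *\<^sub>R Xs u) (u0, t))"
      by (rule continuous_on_compose2) (auto intro!: continuous_intros)
    then have c1: "continuous_on {0..} (\<lambda>t. lam t *\<^sub>R Xs u0)" by simp
    have "continuous_on {0..} (\<lambda>t. inner (lam t *\<^sub>R Xs u0) (Xs u0) / K)"
      by (rule continuous_on_divide[OF continuous_on_inner[OF c1 continuous_on_const] continuous_on_const]) (use K in auto)
    moreover have "(\<lambda>t. inner (lam t *\<^sub>R Xs u0) (Xs u0) / K) = lam" using K by (auto simp: K_def)
    ultimately show ?thesis by metis
  qed
  define g where "g t = lam t * exp (- c * t)" for t
  have lamc: "lam t = exp (c * t)" if t: "t \<ge> 0" for t
  proof (cases "t = 0")
    case True then show ?thesis using lam0 by simp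
  next
    case False
    then have t: "t > 0" using t by simp
    have cg: "continuous_on {0..t} g" unfolding g_def[abs_def]
      by (intro continuous_intros continuous_on_subset[OF clam]) auto
    have "DERIV g x :> 0" if "0 < x" "x < t" for x
    proof -
      have "DERIV (\<lambda>x. exp (- c * x)) x :> exp (- c * x) * (- c)"
        by (auto intro!: derivative_eq_intros)
      from DERIV_mult[OF dlam[of x] this] that
      have "DERIV g x :> dl x * exp (- c * x) + lam x * (exp (- c * x) * (- c))"
        unfolding g_def[abs_def] by (simp add: mult_ac)
      then show ?thesis using dlc[of x] that by (simp add: algebra_simps)
    qed
    from DERIV_isconst2[of 0 t g t, OF t cg this]
    have "g t = g 0" using t by simp
    then have "lam t * exp (- c * t) = 1" using lam0 by (simp add: g_def)
    then show ?thesis by (simp add: exp_minus field_simps)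
  qed
  have bp: "b u = N * c * p u" for u
  proof -
    have "dl 1 * p u = lam 1 * b u / N" by (rule E1) simp
    then have "c * exp c * p u = exp c * b u / N" using dlc[of 1] lamc[of 1] by simp
    then show ?thesis using N by (simp add: field_simps)
  qed
  have dq: "(q has_real_derivative N * (c - 1) * p u) (at u)" for u
    using dq0[of u] bp[of u] by (simp add: algebra_simps)
  have pp: "p (u + 2*pi) = p u" for u by (simp add: p_def perX perN)
  have pq: "q (u + 2*pi) = q u" for u
  proof -
    have "cos (N * (u + 2*pi)) = cos (N*u)" "sin (N * (u + 2*pi)) = sin (N*u)"
      using perN[of u] by (auto simp: nuN)
    then show ?thesis by (simp add: q_def perX)
  qed
  obtain m A B where cm: "c = 1 - (real m)^2 / N^2" and AB: "(A, B) \<noteq> (0, 0)" and mB: "m = 0 \<longrightarrow> B = 0"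
    and pf: "\<And>u. p u = A * cos (real m * u) + B * sin (real m * u)"
    and qf: "\<And>u. q u = real m / N * (- A * sin (real m * u) + B * cos (real m * u))"
    using ode_part[OF N dp dq pp pq] u1 by blast
  define M where "M = real m"
  have mn: "m \<noteq> n"
  proof
    assume mn: "m = n"
    then have MN: "real m / N = 1" using N by (simp add: N_def)
    have "Xs u = (B, - A)" for u
    proof -
      have s: "sin (N*u) * sin (N*u) = 1 - cos (N*u) * cos (N*u)" using sin_squared_eq[of "N*u"] by (simp add: power2_eq_square)
      have s2: "sin (u * real n) * sin (u * real n) = 1 - cos (u * real n) * cos (u * real n)"
        using s by (simp add: N_def mult.commute)
      show ?thesis unfolding dec pf qf MN using mn by (simp add: N_def algebra_simps) (simp add: s2 algebra_simps)
    qed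
    then show False using noncst by simp
  qed
  have NM: "N^2 \<noteq> M^2" using nat_sq_ne[OF mn] by (simp add: N_def M_def)
  define C1 where "C1 = A * (N^2 - M^2) / N"
  define C2 where "C2 = B * (N^2 - M^2) / N"
  have XsF: "Xs = XF N M C1 C2"
  proof
    fix u
    have "XF N M C1 C2 u =
    ((A * cos (M*u) + B * sin (M*u)) * sin (N*u) + M / N * (- A * sin (M*u) + B * cos (M*u)) * cos (N*u),
     - (A * cos (M*u) + B * sin (M*u)) * cos (N*u) + M / N * (- A * sin (M*u) + B * cos (M*u)) * sin (N*u))"
      unfolding C1_def C2_def by (rule XF_AB[OF _ NM]) (use N in simp)
    then show "Xs u = XF N M C1 C2 u" by (simp add: dec pf qf M_def)
  qed
  have D: "(N^2 - M^2) / N \<noteq> 0" using N NM by simp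
  have conds: "(m \<ge> 1 \<and> m \<noteq> n \<and> (C1, C2) \<noteq> (0, 0)) \<or> (m = 0 \<and> C1 \<noteq> 0 \<and> C2 = 0)"
  proof (cases "m = 0")
    case True
    then show ?thesis using mB AB D by (simp add: C1_def C2_def)
  next
    case False
    then show ?thesis using mn AB D by (auto simp: C1_def C2_def)
  qed
  show ?thesis
    apply (rule exI[of _ m], rule exI[of _ C1], rule exI[of _ C2])
    using conds lamc cm XsF by (simp add: N_def M_def)
qed


theorem theorem1p2:
  fixes n :: nat and Xs :: "real \<Rightarrow> real \<times> real" and lam :: "real \<Rightarrow> real"
  defines "\<nu>s \<equiv> (\<lambda>u. (sin (real n * u), - cos (real n * u)))"
  assumes n_pos: "n \<ge> 1"
    and leg: "legendre_curve Xs \<nu>s"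
    and noncst: "\<exists>u v. Xs u \<noteq> Xs v"
    and lam0: "lam 0 = 1"
  shows "(inverse_curvature_flow (\<lambda>u t. lam t *\<^sub>R Xs u) (\<lambda>u t. \<nu>s u))
      \<longleftrightarrow> (\<exists>(m::nat) (C1::real) (C2::real).
            ((m \<ge> 1 \<and> m \<noteq> n \<and> (C1, C2) \<noteq> (0, 0)) \<or> (m = 0 \<and> C1 \<noteq> 0 \<and> C2 = 0))
          \<and> (\<forall>t\<ge>0. lam t = exp ((1 - real m ^ 2 / real n ^ 2) * t))
          \<and> (\<forall>u. Xs u =
               C1 *\<^sub>R
                 ( real n / (real n ^ 2 - real m ^ 2) * sin (real n * u) * cos (real m * u)
                   - real m / (real n ^ 2 - real m ^ 2) * cos (real n * u) * sin (real m * u),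
                   - real n / (real n ^ 2 - real m ^ 2) * cos (real n * u) * cos (real m * u)
                   - real m / (real n ^ 2 - real m ^ 2) * sin (real n * u) * sin (real m * u))
             + C2 *\<^sub>R
                 ( real n / (real n ^ 2 - real m ^ 2) * sin (real n * u) * sin (real m * u)
                   + real m / (real n ^ 2 - real m ^ 2) * cos (real n * u) * cos (real m * u),
                   - real n / (real n ^ 2 - real m ^ 2) * cos (real n * u) * sin (real m * u)
                   + real m / (real n ^ 2 - real m ^ 2) * sin (real n * u) * cos (real m * u))))
    \<and> (\<forall>(m::nat) (C1::real) (C2::real).
          inverse_curvature_flow (\<lambda>u t. lam t *\<^sub>R Xs u) (\<lambda>u t. \<nu>s u)
          \<and> ((m \<ge> 1 \<and> m \<noteq> n \<and> (C1, C2) \<noteq> (0, 0)) \<or> (m = 0 \<and> C1 \<noteq> 0 \<and> C2 = 0))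
          \<and> (\<forall>t\<ge>0. lam t = exp ((1 - real m ^ 2 / real n ^ 2) * t))
          \<and> (\<forall>u. Xs u =
               C1 *\<^sub>R
                 ( real n / (real n ^ 2 - real m ^ 2) * sin (real n * u) * cos (real m * u)
                   - real m / (real n ^ 2 - real m ^ 2) * cos (real n * u) * sin (real m * u),
                   - real n / (real n ^ 2 - real m ^ 2) * cos (real n * u) * cos (real m * u)
                   - real m / (real n ^ 2 - real m ^ 2) * sin (real n * u) * sin (real m * u))
             + C2 *\<^sub>R
                 ( real n / (real n ^ 2 - real m ^ 2) * sin (real n * u) * sin (real m * u)
                   + real m / (real n ^ 2 - real m ^ 2) * cos (real n * u) * cos (real m * u),
                   - real n / (real n ^ 2 - real m ^ 2) * cos (real n * u) * sin (real m * u)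
                   + real m / (real n ^ 2 - real m ^ 2) * sin (real n * u) * cos (real m * u)))
          \<longrightarrow> (\<forall>u. leg_ell Xs \<nu>s u = real n \<and> leg_beta Xs \<nu>s u = C1 * cos (real m * u) + C2 * sin (real m * u)))"
  proof -
  have nn: "m \<noteq> n" if "(m \<ge> 1 \<and> m \<noteq> n \<and> (C1, C2) \<noteq> (0, 0)) \<or> (m = 0 \<and> C1 \<noteq> 0 \<and> C2 = 0)" for m C1 C2
    using that n_pos by auto
  have F1: "\<exists>(m::nat) (C1::real) (C2::real).
            ((m \<ge> 1 \<and> m \<noteq> n \<and> (C1, C2) \<noteq> (0, 0)) \<or> (m = 0 \<and> C1 \<noteq> 0 \<and> C2 = 0))
          \<and> (\<forall>t\<ge>0. lam t = exp ((1 - real m ^ 2 / real n ^ 2) * t))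
          \<and> (\<forall>u. Xs u = XF (real n) (real m) C1 C2 u)"
    if icf: "inverse_curvature_flow (\<lambda>u t. lam t *\<^sub>R Xs u) (\<lambda>u t. \<nu>s u)"
    using only_if_dir[of n Xs lam] n_pos leg noncst lam0 icf unfolding \<nu>s_def fun_eq_iff by blast
  have F2: "inverse_curvature_flow (\<lambda>u t. lam t *\<^sub>R Xs u) (\<lambda>u t. \<nu>s u)"
    if c: "(m \<ge> 1 \<and> m \<noteq> n \<and> (C1, C2) \<noteq> (0, 0)) \<or> (m = 0 \<and> C1 \<noteq> 0 \<and> C2 = 0)"
      and l: "\<forall>t\<ge>0. lam t = exp ((1 - real m ^ 2 / real n ^ 2) * t)"
      and x: "\<forall>u. Xs u = XF (real n) (real m) C1 C2 u" for m C1 C2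
  proof -
    have "Xs = XF (real n) (real m) C1 C2" using x by auto
    then show ?thesis using if_dir[of n m Xs lam C1 C2] n_pos nn[OF c] leg l unfolding \<nu>s_def by blast
  qed
  have F3: "leg_ell Xs \<nu>s u = real n \<and> leg_beta Xs \<nu>s u = C1 * cos (real m * u) + C2 * sin (real m * u)"
    if c: "(m \<ge> 1 \<and> m \<noteq> n \<and> (C1, C2) \<noteq> (0, 0)) \<or> (m = 0 \<and> C1 \<noteq> 0 \<and> C2 = 0)"
      and x: "\<forall>u. Xs u = XF (real n) (real m) C1 C2 u" for m C1 C2 u
  proof
    show "leg_ell Xs \<nu>s u = real n" unfolding \<nu>s_def by (rule ell_nu)
    have "Xs = XF (real n) (real m) C1 C2" using x by auto
    then show "leg_beta Xs \<nu>s u = C1 * cos (real m * u) + C2 * sin (real m * u)"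
      unfolding leg_beta_def using XF_beta[OF nat_sq_ne[OF nn[OF c]], of C1 C2 u]
      by (simp add: XF_vd \<nu>s_def rotJ_nu)
  qed
  show ?thesis unfolding XF_def[symmetric]
    using F1 F2 F3 by blast
qed

end
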